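(* Let $\mathcal{X}=\mathbb{R}/\mathbb{Z}$, let $f_c\in\mathbb{N}$, let $\tilde\varphi_D(x)=\sum_{|k|\le f_c}e^{2\pi i k x}$ and let $\varphi(x)=\tilde\varphi_D(\cdot-x)\in\mathcal{H}=L^2(\mathbb{R}/\mathbb{Z})$. Let $N\in\mathbb{N}$ and suppose $f_c=N$. Then for every $N$-tuple $Z=(z_1,\dots,z_N)$ of pairwise distinct points of $\mathcal{X}$ one has $\eta_{V,Z}(x)<1$ for all $x\notin\{z_1,\dots,z_N\}$, and there is a constant $C>0$ such that $$\eta_W(x)=1-C\sin^{2N}(\pi x)\quad\text{for all }x\in\mathcal{X}.$$ In particular $\eta_W(x)<1$ for all $x\in\mathcal{X}\setminus\{0\}$.
   Context: For $p\in\mathcal{H}$ write $(\Phi^*p)(x)=\langle\varphi(x),p\rangle_{\mathcal{H}}$ (a smooth function on $\mathcal{X}$). The vanishing pre-certificate is $\eta_{V,Z}=\Phi^*p_{V,Z}$ where $p_{V,Z}$ is the element of minimal $\mathcal{H}$-norm among all $p\in\mathcal{H}$ with $(\Phi^*p)(z_i)=1$ and $(\Phi^*p)'(z_i)=0$ for $i=1,\dots,N$. The limiting pre-certificate is $\eta_W=\Phi^*p_W$ where $p_W$ is the element of minimal $\mathcal{H}$-norm among all $p$ with $(\Phi^*p)(0)=1$ and $(\Phi^*p)^{(s)}(0)=0$ for $s=1,\dots,2N-1$. *)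

theory Defs
  imports "HOL-Analysis.Analysis"
begin

text \<open>The torus R/Z is represented by real numbers; elements of
  H = L^2(R/Z) are represented by complex-valued functions on the reals that
  are measurable and square integrable on the fundamental domain [0,1]
  (only their values on [0,1] matter).\<close>

definition dirichlet :: "nat \<Rightarrow> real \<Rightarrow> complex" where
  "dirichlet fc t = (\<Sum>k\<in>{- int fc..int fc}. cis (2 * pi * of_int k * t))"

definition feat :: "nat \<Rightarrow> real \<Rightarrow> (real \<Rightarrow> complex)" where
  "feat fc x = (\<lambda>t. dirichlet fc (t - x))"

definition L2 :: "(real \<Rightarrow> complex) \<Rightarrow> bool" where
  "L2 p \<longleftrightarrow> set_borel_measurable lborel {0..1} p \<and>
              set_integrable lborel {0..1} (\<lambda>t. (cmod (p t))^2)"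

definition l2normsq :: "(real \<Rightarrow> complex) \<Rightarrow> real" where
  "l2normsq p = (LINT t:{0..1}|lborel. (cmod (p t))^2)"

definition innerH :: "(real \<Rightarrow> complex) \<Rightarrow> (real \<Rightarrow> complex) \<Rightarrow> complex" where
  "innerH f g = (LINT t:{0..1}|lborel. cnj (f t) * g t)"

definition Phi_adj :: "nat \<Rightarrow> (real \<Rightarrow> complex) \<Rightarrow> real \<Rightarrow> complex" where
  "Phi_adj fc p x = innerH (feat fc x) p"

fun hderiv :: "nat \<Rightarrow> (real \<Rightarrow> complex) \<Rightarrow> real \<Rightarrow> complex" where
  "hderiv 0 f = f"
| "hderiv (Suc n) f = (\<lambda>x. vector_derivative (hderiv n f) (at x))"

definition admissible_V :: "nat \<Rightarrow> nat \<Rightarrow> (nat \<Rightarrow> real) \<Rightarrow> (real \<Rightarrow> complex) \<Rightarrow> bool" where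
  "admissible_V fc N z p \<longleftrightarrow> L2 p \<and>
     (\<forall>i<N. Phi_adj fc p (z i) = 1 \<and> hderiv 1 (Phi_adj fc p) (z i) = 0)"

definition vanishing_precert_vec :: "nat \<Rightarrow> nat \<Rightarrow> (nat \<Rightarrow> real) \<Rightarrow> (real \<Rightarrow> complex) \<Rightarrow> bool" where
  "vanishing_precert_vec fc N z p \<longleftrightarrow> admissible_V fc N z p \<and>
     (\<forall>q. admissible_V fc N z q \<longrightarrow> l2normsq p \<le> l2normsq q)"

definition admissible_W :: "nat \<Rightarrow> nat \<Rightarrow> (real \<Rightarrow> complex) \<Rightarrow> bool" where
  "admissible_W fc N p \<longleftrightarrow> L2 p \<and> Phi_adj fc p 0 = 1 \<and>
     (\<forall>s\<in>{1..2*N-1}. hderiv s (Phi_adj fc p) 0 = 0)"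

definition limiting_precert_vec :: "nat \<Rightarrow> nat \<Rightarrow> (real \<Rightarrow> complex) \<Rightarrow> bool" where
  "limiting_precert_vec fc N p \<longleftrightarrow> admissible_W fc N p \<and>
     (\<forall>q. admissible_W fc N q \<longrightarrow> l2normsq p \<le> l2normsq q)"

end

theory Submission
  imports Defs "HOL-Computational_Algebra.Polynomial"
begin


lemma cis_vd: "((\<lambda>x. cis (a * x)) has_vector_derivative (\<i> * of_real a * cis (a * x))) (at x within S)"
proof -
  have "((\<lambda>x. cis (a * x)) has_derivative (\<lambda>t. (a*t) *\<^sub>R (\<i> * cis (a*x)))) (at x within S)"
    by (intro derivative_eq_intros) auto
  moreover have "(\<lambda>t. (a*t) *\<^sub>R (\<i> * cis (a*x))) = (\<lambda>t. t *\<^sub>R (\<i> * of_real a * cis (a * x)))"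
    by (auto simp: scaleR_conv_of_real)
  ultimately show ?thesis unfolding has_vector_derivative_def by simp
qed

lemma orth: "(LINT t:{0..1}|lborel. cis (2*pi * of_int m * t)) = (if m=0 then 1 else 0)"
proof (cases "m = 0")
  case True
  have "(LINT (t::real):{0..1}|lborel. (1::complex)) = 1"
    by (simp add: set_lebesgue_integral_def scaleR_conv_of_real content_real)
  then show ?thesis using True by simp
next
  case False
  define a where "a = 2 * pi * of_int m"
  have a0: "a \<noteq> 0" using False by (simp add: a_def)
  have si: "set_integrable lborel {0..1::real} (\<lambda>t. cis (a*t))"
    unfolding set_integrable_def
    by (rule borel_integrable_compact) (auto intro!: continuous_intros)
  have "((\<lambda>t. cis (a*t)) has_integral ((cis (a*1) - cis (a*0)) / (\<i> * of_real a))) {0..1}"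
  proof -
    have "((\<lambda>t. cis (a*t) / (\<i> * of_real a)) has_vector_derivative cis (a*x)) (at x within {0..1})" for x
      using has_vector_derivative_divide[OF cis_vd[of a x "{0..1}"], of "\<i> * of_real a"] a0
      by simp
    from fundamental_theorem_of_calculus[OF _ this]
    show ?thesis by (simp add: diff_divide_distrib)
  qed
  moreover have "cis (a*1) = 1"
    unfolding a_def by (metis cis_2pi cis_multiple_2pi mult.commute mult.left_commute mult_1_right Ints_of_int)
  ultimately have "((\<lambda>t. cis (a*t)) has_integral 0) {0..1}" by simp
  then have "integral {0..1} (\<lambda>t. cis (a*t)) = 0" by (rule integral_unique)
  then show ?thesis using set_borel_integral_eq_integral(2)[OF si] False by (simp add: a_def)
qed

lemma sint_sum: "(\<And>i. i\<in>I \<Longrightarrow> set_integrable M A (f i)) \<Longrightarrow>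
   (LINT x:A|M. (\<Sum>i\<in>I. f i x)) = (\<Sum>i\<in>I. LINT x:A|M. f i x)"
  unfolding set_lebesgue_integral_def set_integrable_def
  by (simp add: scaleR_sum_right integral_sum)

lemma sintegrable_sum: "(\<And>i. i\<in>I \<Longrightarrow> set_integrable M A (f i)) \<Longrightarrow>
   set_integrable M A (\<lambda>x. \<Sum>i\<in>I. f i x)"
  unfolding set_integrable_def scaleR_sum_right
  by (auto intro!: Bochner_Integration.integrable_sum)

lemma sint_Re: assumes "set_integrable M A f" shows "(LINT x:A|M. Re (f x)) = Re (LINT x:A|M. f x)"
proof -
  have a: "integrable M (\<lambda>x. indicat_real A x *\<^sub>R f x)" using assms by (simp add: set_integrable_def)
  have "integral\<^sup>L M (\<lambda>x. Re (indicat_real A x *\<^sub>R f x)) = Re (integral\<^sup>L M (\<lambda>x. indicat_real A x *\<^sub>R f x))"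
    by (rule integral_bounded_linear[OF bounded_linear_Re a])
  moreover have "(\<lambda>x. Re (indicat_real A x *\<^sub>R f x)) = (\<lambda>x. indicat_real A x *\<^sub>R Re (f x))"
    by (simp add: fun_eq_iff)
  ultimately show ?thesis by (simp add: set_lebesgue_integral_def)
qed

lemma sintegrable_Re: assumes "set_integrable M A f" shows "set_integrable M A (\<lambda>x. Re (f x))"
proof -
  have a: "integrable M (\<lambda>x. indicat_real A x *\<^sub>R f x)" using assms by (simp add: set_integrable_def)
  have "integrable M (\<lambda>x. Re (indicat_real A x *\<^sub>R f x))"
    by (rule integrable_bounded_linear[OF bounded_linear_Re a])
  moreover have "(\<lambda>x. Re (indicat_real A x *\<^sub>R f x)) = (\<lambda>x. indicat_real A x *\<^sub>R Re (f x))"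
    by (simp add: fun_eq_iff)
  ultimately show ?thesis by (simp add: set_integrable_def)
qed

lemma sintegrable_cnj: assumes "set_integrable M A f" shows "set_integrable M A (\<lambda>x. cnj (f x))"
proof -
  have a: "integrable M (\<lambda>x. indicat_real A x *\<^sub>R f x)" using assms by (simp add: set_integrable_def)
  have "integrable M (\<lambda>x. cnj (indicat_real A x *\<^sub>R f x))"
    by (rule integrable_cnj[OF a])
  moreover have "(\<lambda>x. cnj (indicat_real A x *\<^sub>R f x)) = (\<lambda>x. indicat_real A x *\<^sub>R cnj (f x))"
    by (simp add: fun_eq_iff)
  ultimately show ?thesis by (simp add: set_integrable_def)
qed

lemma sint_cnj: "(LINT x:A|M. cnj (f x)) = cnj (LINT x:A|M. f x)"
proof -
  have "integral\<^sup>L M (\<lambda>x. cnj (indicat_real A x *\<^sub>R f x)) = cnj (integral\<^sup>L M (\<lambda>x. indicat_real A x *\<^sub>R f x))"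
    by (rule Bochner_Integration.integral_cnj)
  moreover have "(\<lambda>x. cnj (indicat_real A x *\<^sub>R f x)) = (\<lambda>x. indicat_real A x *\<^sub>R cnj (f x))"
    by (simp add: fun_eq_iff)
  ultimately show ?thesis by (simp add: set_lebesgue_integral_def)
qed

lemma L2_int1: "L2 q \<Longrightarrow> set_integrable lborel {0..1::real} (\<lambda>t. 1 + (cmod (q t))^2)"
proof -
  assume "L2 q"
  then have a: "set_integrable lborel {0..1::real} (\<lambda>t. (cmod (q t))^2)" by (simp add: L2_def)
  have b: "set_integrable lborel {0..1::real} (\<lambda>t. 1::real)"
    unfolding set_integrable_def by (rule borel_integrable_compact) auto
  show ?thesis using set_integral_add(1)[OF b a] by simp
qed

lemma L2_mult_int:
  assumes "L2 q" "continuous_on UNIV h" "\<And>t. cmod (h t) \<le> 1"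
  shows "set_integrable lborel {0..1::real} (\<lambda>t. q t * h t)"
proof (rule set_integrable_bound[OF L2_int1[OF assms(1)]])
  have m: "set_borel_measurable lborel {0..1} q" using assms(1) by (simp add: L2_def)
  have hm: "h \<in> borel_measurable lborel"
    using assms(2) by (simp add: borel_measurable_continuous_onI)
  have "(\<lambda>x. indicat_real {0..1} x *\<^sub>R (q x * h x)) = (\<lambda>x. (indicat_real {0..1} x *\<^sub>R q x) * h x)"
    by (auto simp: scaleR_conv_of_real)
  moreover have "(\<lambda>x. (indicat_real {0..1} x *\<^sub>R q x) * h x) \<in> borel_measurable lborel"
    using m hm unfolding set_borel_measurable_def by (intro borel_measurable_times) auto
  ultimately show "set_borel_measurable lborel {0..1} (\<lambda>t. q t * h t)"
    unfolding set_borel_measurable_def by simp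
  show "AE x in lborel. x \<in> {0..1} \<longrightarrow> cmod (q x * h x) \<le> norm (1 + (cmod (q x))\<^sup>2)"
  proof (intro AE_I2 impI)
    fix x
    have "cmod (q x * h x) \<le> cmod (q x)"
      using assms(3)[of x] norm_ge_zero[of "q x"] unfolding norm_mult by (simp add: mult_left_le)
    also have "\<dots> \<le> 1 + (cmod (q x))\<^sup>2"
    proof -
      have "0 \<le> (cmod (q x) - 1)^2" by simp
      then have "2 * cmod (q x) \<le> 1 + (cmod (q x))\<^sup>2" by (simp add: power2_eq_square algebra_simps)
      then show ?thesis using norm_ge_zero[of "q x"] by linarith
    qed
    finally show "cmod (q x * h x) \<le> norm (1 + (cmod (q x))\<^sup>2)" by simp
  qed
qed



definition th :: "nat \<Rightarrow> nat \<Rightarrow> real" where "th N j = 2 * pi * (real j - real N)"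
definition T :: "nat \<Rightarrow> (nat \<Rightarrow> complex) \<Rightarrow> real \<Rightarrow> complex" where
  "T N c x = (\<Sum>j\<le>2*N. c j * cis (th N j * x))"
definition fco :: "nat \<Rightarrow> (real \<Rightarrow> complex) \<Rightarrow> nat \<Rightarrow> complex" where
  "fco N q j = (LINT t:{0..1}|lborel. q t * cis (- th N j * t))"

lemma th_diff: "th N i - th N j = 2 * pi * of_int (int i - int j)"
  by (simp add: th_def algebra_simps)

lemma cont_T: "continuous_on UNIV (T N c)"
  unfolding T_def by (intro continuous_intros)

lemma L2_T: "L2 (T N c)"
proof -
  have "set_borel_measurable borel {0..1} (T N c)"
    by (rule set_measurable_continuous_on) (auto intro: continuous_on_subset[OF cont_T])
  moreover have "set_integrable lborel {0..1::real} (\<lambda>t. (cmod (T N c t))^2)"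
    unfolding set_integrable_def
    by (rule borel_integrable_compact) (auto intro!: continuous_intros continuous_on_subset[OF cont_T])
  ultimately show ?thesis by (simp add: L2_def set_borel_measurable_def)
qed

lemma sint_cont: fixes f :: "real \<Rightarrow> complex" assumes "continuous_on UNIV f" shows "set_integrable lborel {0..1::real} f"
  unfolding set_integrable_def
  by (rule borel_integrable_compact) (auto intro: continuous_on_subset[OF assms])

lemma fco_T: assumes "j \<le> 2*N" shows "fco N (T N c) j = c j"
proof -
  have e: "T N c t * cis (- th N j * t) = (\<Sum>i\<le>2*N. c i * cis (2 * pi * of_int (int i - int j) * t))" for t
    unfolding T_def sum_distrib_right
    by (intro sum.cong refl) (simp add: mult.assoc cis_mult th_def algebra_simps)
  have "fco N (T N c) j = (LINT t:{0..1}|lborel. (\<Sum>i\<le>2*N. c i * cis (2 * pi * of_int (int i - int j) * t)))"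
    unfolding fco_def e ..
  also have "\<dots> = (\<Sum>i\<le>2*N. LINT t:{0..1}|lborel. c i * cis (2 * pi * of_int (int i - int j) * t))"
    by (rule sint_sum) (auto intro!: sint_cont continuous_intros)
  also have "\<dots> = (\<Sum>i\<le>2*N. c i * (if int i - int j = 0 then 1 else 0))"
    by (intro sum.cong refl) (simp only: set_integral_mult_right orth)
  also have "\<dots> = c j" using assms by (simp add: if_distrib cong: if_cong)
  finally show ?thesis .
qed

lemma ip_term: "cnj (q t) * T N c t = (\<Sum>j\<le>2*N. c j * cnj (q t * cis (- th N j * t)))"
  unfolding T_def sum_distrib_left
  by (intro sum.cong refl) (simp add: cis_cnj)

lemma cmod_cis_le: "cmod (cis a) \<le> 1" by simp

lemma ipint: "L2 q \<Longrightarrow> set_integrable lborel {0..1} (\<lambda>t. cnj (q t) * T N c t)"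
  unfolding ip_term
  by (intro sintegrable_sum set_integrable_mult_right sintegrable_cnj L2_mult_int)
     (auto intro!: continuous_intros)

lemma ip_T: assumes "L2 q"
  shows "(LINT t:{0..1}|lborel. cnj (q t) * T N c t) = (\<Sum>j\<le>2*N. c j * cnj (fco N q j))"
  unfolding ip_term
  apply (subst sint_sum)
   apply (intro set_integrable_mult_right sintegrable_cnj L2_mult_int assms)
    apply (auto intro!: continuous_intros)[2]
  apply (simp only: set_integral_mult_right sint_cnj fco_def)
  done

lemma norm_T: "l2normsq (T N c) = (\<Sum>j\<le>2*N. (cmod (c j))^2)"
proof -
  have "l2normsq (T N c) = (LINT t:{0..1}|lborel. Re (cnj (T N c t) * T N c t))"
    unfolding l2normsq_def
    by (intro set_lebesgue_integral_cong) (auto simp: complex_norm_square[symmetric] mult.commute)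
  also have "\<dots> = Re (LINT t:{0..1}|lborel. cnj (T N c t) * T N c t)"
    by (rule sint_Re[OF ipint[OF L2_T]])
  also have "\<dots> = Re (\<Sum>j\<le>2*N. c j * cnj (fco N (T N c) j))"
    by (simp only: ip_T[OF L2_T])
  also have "\<dots> = Re (\<Sum>j\<le>2*N. complex_of_real ((cmod (c j))^2))"
    by (intro arg_cong[where f=Re] sum.cong refl) (auto simp: fco_T, metis complex_norm_square of_real_power)
  also have "\<dots> = (\<Sum>j\<le>2*N. (cmod (c j))^2)" by (simp add: Re_sum)
  finally show ?thesis .
qed



lemma cmod_diff_sq: "(cmod (a - b))^2 = (cmod a)^2 - 2 * Re (cnj a * b) + (cmod b)^2"
  unfolding cmod_power2 by (simp add: power2_eq_square algebra_simps)

lemma bessel: assumes "L2 q"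
  shows "(\<Sum>j\<le>2*N. (cmod (fco N q j))^2) \<le> l2normsq q"
proof -
  define c where "c = fco N q"
  have i1: "set_integrable lborel {0..1} (\<lambda>t. Re (cnj (q t) * T N c t))"
    by (rule sintegrable_Re[OF ipint[OF assms]])
  have i2: "set_integrable lborel {0..1::real} (\<lambda>t. (cmod (T N c t))^2)"
    using L2_T by (simp add: L2_def)
  have i3: "set_integrable lborel {0..1::real} (\<lambda>t. (cmod (q t))^2)"
    using assms by (simp add: L2_def)
  have "(LINT t:{0..1}|lborel. 2 * Re (cnj (q t) * T N c t) - (cmod (T N c t))^2) \<le> l2normsq q"
    unfolding l2normsq_def
  proof (rule set_integral_mono)
    show "set_integrable lborel {0..1} (\<lambda>t. 2 * Re (cnj (q t) * T N c t) - (cmod (T N c t))\<^sup>2)"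
      by (intro set_integral_diff(1) set_integrable_mult_right i1 i2)
    show "set_integrable lborel {0..1} (\<lambda>t. (cmod (q t))\<^sup>2)" by (rule i3)
    fix t
    have "0 \<le> (cmod (q t - T N c t))^2" by simp
    then show "2 * Re (cnj (q t) * T N c t) - (cmod (T N c t))\<^sup>2 \<le> (cmod (q t))\<^sup>2"
      unfolding cmod_diff_sq by linarith
  qed
  moreover have "(LINT t:{0..1}|lborel. 2 * Re (cnj (q t) * T N c t) - (cmod (T N c t))^2)
      = 2 * Re (LINT t:{0..1}|lborel. cnj (q t) * T N c t) - l2normsq (T N c)"
    unfolding l2normsq_def
    apply (subst set_integral_diff(2))
      apply (intro set_integrable_mult_right i1)
     apply (rule i2)
    apply (simp only: set_integral_mult_right sint_Re[OF ipint[OF assms]])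
    done
  moreover have "Re (LINT t:{0..1}|lborel. cnj (q t) * T N c t) = (\<Sum>j\<le>2*N. (cmod (c j))^2)"
  proof -
    have "(LINT t:{0..1}|lborel. cnj (q t) * T N c t) = (\<Sum>j\<le>2*N. complex_of_real ((cmod (c j))^2))"
      unfolding ip_T[OF assms]
      by (intro sum.cong refl) (auto simp: c_def, metis complex_norm_square of_real_power)
    then show ?thesis by (simp add: Re_sum)
  qed
  ultimately show ?thesis by (simp add: norm_T c_def)
qed

lemma dirichlet_alt: "dirichlet N s = (\<Sum>j\<le>2*N. cis (th N j * s))"
proof -
  have inj: "inj_on (\<lambda>j::nat. int j - int N) {..2*N}" by (auto simp: inj_on_def)
  have im: "(\<lambda>j::nat. int j - int N) ` {..2*N} = {- int N..int N}"
  proof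
    show "{- int N..int N} \<subseteq> (\<lambda>j::nat. int j - int N) ` {..2*N}"
    proof
      fix k assume k: "k \<in> {- int N..int N}"
      then have "k = int (nat (k + int N)) - int N" "nat (k + int N) \<in> {..2*N}" by auto
      then show "k \<in> (\<lambda>j::nat. int j - int N) ` {..2*N}" by blast
    qed
  qed auto
  have "dirichlet N s = (\<Sum>k\<in>(\<lambda>j::nat. int j - int N) ` {..2*N}. cis (2 * pi * of_int k * s))"
    unfolding dirichlet_def im ..
  also have "\<dots> = (\<Sum>j\<le>2*N. cis (2 * pi * of_int (int j - int N) * s))"
    by (rule sum.reindex[OF inj, unfolded comp_def])
  also have "\<dots> = (\<Sum>j\<le>2*N. cis (th N j * s))"
    by (simp add: th_def)
  finally show ?thesis .
qed

lemma Phi_T: assumes "L2 q" shows "Phi_adj N q x = T N (fco N q) x"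
proof -
  have e: "cnj (feat N x t) * q t = (\<Sum>j\<le>2*N. cis (th N j * x) * (q t * cis (- th N j * t)))" for t
    unfolding feat_def dirichlet_alt cnj_sum sum_distrib_right
    by (intro sum.cong refl) (simp add: cis_cnj cis_mult algebra_simps)
  have "Phi_adj N q x = (LINT t:{0..1}|lborel. (\<Sum>j\<le>2*N. cis (th N j * x) * (q t * cis (- th N j * t))))"
    unfolding Phi_adj_def innerH_def e ..
  also have "\<dots> = (\<Sum>j\<le>2*N. cis (th N j * x) * fco N q j)"
    apply (subst sint_sum)
     apply (intro set_integrable_mult_right L2_mult_int assms)
      apply (auto intro!: continuous_intros)[2]
    apply (simp only: set_integral_mult_right fco_def)
    done
  also have "\<dots> = T N (fco N q) x" by (simp add: T_def mult.commute)
  finally show ?thesis .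
qed

definition D :: "nat \<Rightarrow> (nat \<Rightarrow> complex) \<Rightarrow> nat \<Rightarrow> real \<Rightarrow> complex" where
  "D N c s x = (\<Sum>j\<le>2*N. c j * (\<i> * of_real (th N j))^s * cis (th N j * x))"

lemma D_deriv: "(D N c s has_vector_derivative D N c (Suc s) x) (at x)"
  unfolding D_def
  by (rule derivative_eq_intros cis_vd refl | simp add: algebra_simps)+

lemma hd_T: "hderiv s (T N c) = D N c s"
proof (induction s)
  case 0
  then show ?case by (simp add: D_def T_def fun_eq_iff)
next
  case (Suc s)
  show ?case by (simp add: Suc.IH vector_derivative_at[OF D_deriv])
qed



definition ee :: "nat \<Rightarrow> nat \<Rightarrow> complex" where "ee N j = (if j = N then 1 else 0)"

lemma cmod_add_sq: "(cmod (a + b))^2 = (cmod a)^2 + 2 * Re (cnj a * b) + (cmod b)^2"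
  unfolding cmod_power2 by (simp add: power2_eq_square algebra_simps)

lemma F_formula:
  assumes gN: "\<gamma> N = complex_of_real g0" and S: "S = (\<Sum>j\<le>2*N. (cmod (\<gamma> j))^2)" and Sp: "S > 0"
  shows "(\<Sum>j\<le>2*N. (cmod (ee N j + t * \<gamma> j))^2) = 1 - g0^2 / S + S * (cmod (t + of_real (g0 / S)))^2"
proof -
  have "(\<Sum>j\<le>2*N. (cmod (ee N j + t * \<gamma> j))^2) =
     (\<Sum>j\<le>2*N. (cmod (ee N j))^2) + 2 * (\<Sum>j\<le>2*N. Re (cnj (ee N j) * (t * \<gamma> j))) + (\<Sum>j\<le>2*N. (cmod t)^2 * (cmod (\<gamma> j))^2)"
    unfolding cmod_add_sq by (simp add: sum.distrib sum_distrib_left norm_mult power_mult_distrib)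
  also have "(\<Sum>j\<le>2*N. (cmod (ee N j))^2) = (\<Sum>j\<le>2*N. if j = N then 1 else 0)"
    by (rule sum.cong) (auto simp: ee_def)
  also have "\<dots> = 1" by simp
  also have "(\<Sum>j\<le>2*N. Re (cnj (ee N j) * (t * \<gamma> j))) = (\<Sum>j\<le>2*N. if j = N then Re (t * \<gamma> N) else 0)"
    by (rule sum.cong) (auto simp: ee_def)
  also have "\<dots> = g0 * Re t" by (simp add: gN)
  also have "(\<Sum>j\<le>2*N. (cmod t)^2 * (cmod (\<gamma> j))^2) = (cmod t)^2 * S"
    by (simp add: S sum_distrib_left)
  finally have "(\<Sum>j\<le>2*N. (cmod (ee N j + t * \<gamma> j))^2) = 1 + 2 * g0 * Re t + (cmod t)^2 * S" by simp
  moreover have "S * (cmod (t + of_real (g0 / S)))^2 = S * (cmod t)^2 + 2 * g0 * Re t + g0^2 / S"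
    using Sp unfolding cmod_power2 by (simp add: power2_eq_square field_simps)
  ultimately show ?thesis by simp
qed

lemma generic:
  fixes adm :: "(real \<Rightarrow> complex) \<Rightarrow> bool"
  assumes adm: "\<And>q. adm q \<longleftrightarrow> L2 q \<and> (\<exists>t. \<forall>j\<le>2*N. fco N q j = ee N j + t * \<gamma> j)"
    and gN: "\<gamma> N = complex_of_real g0" and g0: "g0 > 0"
    and S: "S = (\<Sum>j\<le>2*N. (cmod (\<gamma> j))^2)"
  shows "\<exists>p. adm p \<and> (\<forall>q. adm q \<longrightarrow> l2normsq p \<le> l2normsq q)"
    and "\<And>p. adm p \<and> (\<forall>q. adm q \<longrightarrow> l2normsq p \<le> l2normsq q) \<Longrightarrow>
          \<forall>x. Phi_adj N p x = 1 - complex_of_real (g0 / S) * T N \<gamma> x"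
proof -
  have "g0^2 \<le> S"
  proof -
    have "(cmod (\<gamma> N))^2 \<le> S" unfolding S by (rule member_le_sum) auto
    then show ?thesis using gN g0 by simp
  qed
  then have Sp: "S > 0" using g0 by (smt (verit) zero_less_power)
  define ts where "ts = - complex_of_real (g0 / S)"
  define F where "F t = (\<Sum>j\<le>2*N. (cmod (ee N j + t * \<gamma> j))^2)" for t
  have F: "F t = 1 - g0^2 / S + S * (cmod (t - ts))^2" for t
    unfolding F_def ts_def using F_formula[OF gN S Sp] by simp
  define a where "a j = ee N j + ts * \<gamma> j" for j
  define p0 where "p0 = T N a"
  have p0adm: "adm p0"
    unfolding adm p0_def using L2_T fco_T a_def by auto
  have p0n: "l2normsq p0 = F ts" unfolding p0_def norm_T F_def a_def ..
  have lowb: "F t \<le> l2normsq q" if "adm q" "\<forall>j\<le>2*N. fco N q j = ee N j + t * \<gamma> j" for q t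
  proof -
    have "F t = (\<Sum>j\<le>2*N. (cmod (fco N q j))^2)" unfolding F_def using that(2) by simp
    also have "\<dots> \<le> l2normsq q" using bessel that(1) adm by blast
    finally show ?thesis .
  qed
  have Fmin: "F ts \<le> F t" for t using F[of t] F[of ts] Sp by simp
  show "\<exists>p. adm p \<and> (\<forall>q. adm q \<longrightarrow> l2normsq p \<le> l2normsq q)"
  proof (intro exI conjI allI impI)
    show "adm p0" by (rule p0adm)
    fix q assume "adm q"
    then obtain t where tq: "\<forall>j\<le>2*N. fco N q j = ee N j + t * \<gamma> j" using adm by blast
    show "l2normsq p0 \<le> l2normsq q" using lowb[OF \<open>adm q\<close> tq] Fmin[of t] p0n by simp
  qed
  fix p assume pm: "adm p \<and> (\<forall>q. adm q \<longrightarrow> l2normsq p \<le> l2normsq q)"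
  then obtain t where t: "\<forall>j\<le>2*N. fco N p j = ee N j + t * \<gamma> j" using adm by blast
  have "F t \<le> F ts" using lowb[OF conjunct1[OF pm] t] pm p0adm p0n by auto
  then have "S * (cmod (t - ts))^2 \<le> 0" using F[of t] F[of ts] by simp
  then have "t = ts" using Sp by (simp add: mult_le_0_iff)
  show "\<forall>x. Phi_adj N p x = 1 - complex_of_real (g0 / S) * T N \<gamma> x"
  proof
    fix x
    have "Phi_adj N p x = T N (fco N p) x" using Phi_T pm adm by blast
    also have "\<dots> = (\<Sum>j\<le>2*N. (ee N j + ts * \<gamma> j) * cis (th N j * x))"
      unfolding T_def using t \<open>t = ts\<close> by simp
    also have "\<dots> = (\<Sum>j\<le>2*N. ee N j * cis (th N j * x)) + ts * T N \<gamma> x"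
      by (simp add: distrib_right sum.distrib T_def sum_distrib_left mult.assoc)
    also have "(\<Sum>j\<le>2*N. ee N j * cis (th N j * x)) = (\<Sum>j\<le>2*N. if j = N then 1 else 0)"
      by (rule sum.cong) (auto simp: ee_def th_def)
    also have "\<dots> = 1" by simp
    finally show "Phi_adj N p x = 1 - complex_of_real (g0 / S) * T N \<gamma> x" by (simp add: ts_def)
  qed
qed



definition Pd :: "nat \<Rightarrow> (nat \<Rightarrow> complex) \<Rightarrow> complex poly" where
  "Pd N d = (\<Sum>j\<le>2*N. monom (d j) j)"

lemma poly_Pd: "poly (Pd N d) w = (\<Sum>j\<le>2*N. d j * w^j)"
  by (simp add: Pd_def poly_sum poly_monom)

lemma coeff_Pd: "j \<le> 2*N \<Longrightarrow> coeff (Pd N d) j = d j"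
  unfolding Pd_def by (rule coeff_sum_monom)

lemma degree_Pd: "degree (Pd N d) \<le> 2*N"
  unfolding Pd_def by (rule degree_sum_le) (auto intro: order.trans[OF degree_monom_le])

lemma pderiv_Pd: "poly (pderiv (Pd N d)) w * w = (\<Sum>j\<le>2*N. d j * of_nat j * w^j)"
proof -
  have d1: "(poly (Pd N d) has_field_derivative poly (pderiv (Pd N d)) w) (at w)"
    by (rule poly_DERIV)
  have d2: "((\<lambda>w. \<Sum>j\<le>2*N. d j * w^j) has_field_derivative (\<Sum>j\<le>2*N. d j * (of_nat j * w^(j-1)))) (at w)"
    by (rule derivative_eq_intros refl)+ (simp add: mult_ac)
  have "poly (Pd N d) = (\<lambda>w. \<Sum>j\<le>2*N. d j * w^j)" by (simp add: fun_eq_iff poly_Pd)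
  then have e: "poly (pderiv (Pd N d)) w = (\<Sum>j\<le>2*N. d j * (of_nat j * w^(j-1)))"
    using d1 d2 DERIV_unique by metis
  show ?thesis unfolding e sum_distrib_right
  proof (rule sum.cong[OF refl])
    fix j show "d j * (of_nat j * w ^ (j - 1)) * w = d j * of_nat j * w ^ j"
      by (cases j) (simp_all add: algebra_simps)
  qed
qed

lemma cis_th: "cis (th N j * z) = cis (- 2 * pi * real N * z) * cis (2 * pi * z) ^ j"
proof -
  have "cis (- 2 * pi * real N * z) * cis (2 * pi * z) ^ j = cis (- 2 * pi * real N * z + real j * (2 * pi * z))"
    unfolding Complex.DeMoivre cis_mult ..
  also have "- 2 * pi * real N * z + real j * (2 * pi * z) = th N j * z" by (simp add: th_def algebra_simps)
  finally show ?thesis by simp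
qed

lemma D0_rel: "D N d 0 z = cis (- 2 * pi * real N * z) * poly (Pd N d) (cis (2 * pi * z))"
  unfolding D_def poly_Pd cis_th sum_distrib_left
  by (intro sum.cong refl) (simp add: algebra_simps)

lemma D1_rel: "D N d 1 z = \<i> * 2 * of_real pi * cis (- 2 * pi * real N * z) *
   (poly (pderiv (Pd N d)) (cis (2 * pi * z)) * cis (2 * pi * z) - of_nat N * poly (Pd N d) (cis (2 * pi * z)))"
  unfolding pderiv_Pd poly_Pd D_def cis_th sum_distrib_left right_diff_distrib sum_subtractf[symmetric]
  by (intro sum.cong refl) (simp add: th_def algebra_simps)



lemma D_cong: "(\<forall>j\<le>2*N. c j = c' j) \<Longrightarrow> D N c s x = D N c' s x"
  unfolding D_def by (intro sum.cong refl) auto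

lemma D_lin: "D N (\<lambda>j. a j + t * b j) s x = D N a s x + t * D N b s x"
  unfolding D_def by (simp add: sum.distrib sum_distrib_left algebra_simps)

lemma D_diff: "D N (\<lambda>j. a j - b j) s x = D N a s x - D N b s x"
  unfolding D_def by (simp add: sum_subtractf algebra_simps)

lemma D_ee: "D N (ee N) s x = (if s = 0 then 1 else 0)"
proof -
  have "D N (ee N) s x = (\<Sum>j\<le>2*N. if j = N then (\<i> * complex_of_real (th N N)) ^ s * cis (th N N * x) else 0)"
    unfolding D_def by (rule sum.cong) (auto simp: ee_def)
  also have "\<dots> = (if s = 0 then 1 else 0)" by (simp add: th_def)
  finally show ?thesis .
qed

lemma D_T: "D N c 0 = T N c"
  by (simp add: D_def T_def fun_eq_iff)

lemma dr_single:
  fixes P :: "complex poly"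
  assumes "poly P a = 0" "poly (pderiv P) a = 0"
  shows "[:-a,1:]^2 dvd P"
proof -
  obtain R where R: "P = [:-a,1:] * R" using assms(1) poly_eq_0_iff_dvd by blast
  have pl: "pderiv [:-a,1:] = 1" by (simp add: pderiv_pCons)
  have "poly (pderiv P) a = poly R a" unfolding R pderiv_mult pl by simp
  then have "poly R a = 0" using assms(2) by simp
  then obtain Q where Q: "R = [:-a,1:] * Q" using poly_eq_0_iff_dvd by blast
  have "P = [:-a,1:]^2 * Q" by (simp only: R Q power2_eq_square mult.assoc)
  then show ?thesis by simp
qed

lemma dr_conv:
  fixes P :: "complex poly"
  assumes "[:-a,1:]^2 dvd P"
  shows "poly P a = 0 \<and> poly (pderiv P) a = 0"
proof -
  obtain Q where Q: "P = [:-a,1:]^2 * Q" using assms by blast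
  have pl: "pderiv [:-a,1:] = 1" by (simp add: pderiv_pCons)
  have "poly (pderiv P) a = 0" unfolding Q power2_eq_square mult.assoc pderiv_mult pl by simp
  then show ?thesis by (simp add: Q)
qed

lemma dr_multi:
  fixes P :: "complex poly"
  assumes "finite I" "inj_on w I" "\<forall>i\<in>I. poly P (w i) = 0 \<and> poly (pderiv P) (w i) = 0"
  shows "(\<Prod>i\<in>I. [:-w i,1:]^2) dvd P"
  using assms
proof (induction I arbitrary: P rule: finite_induct)
  case empty
  then show ?case by simp
next
  case (insert i I)
  obtain Q where Q: "P = [:-w i,1:]^2 * Q"
    using dr_single insert.prems(2) by blast
  have "\<forall>k\<in>I. poly Q (w k) = 0 \<and> poly (pderiv Q) (w k) = 0"
  proof
    fix k assume k: "k \<in> I"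
    have "w i \<notin> w ` I" using insert.prems(1) insert.hyps(2) by (simp add: inj_on_insert)
    then have ne: "w k \<noteq> w i" using k by (metis image_eqI)
    have "poly P (w k) = 0" using insert.prems(2) k by auto
    then have q0: "poly Q (w k) = 0" using ne by (simp add: Q)
    have "poly (pderiv P) (w k) = 0" using insert.prems(2) k by auto
    moreover have "pderiv P = [:-w i,1:]^2 * pderiv Q + Q * pderiv ([:-w i,1:]^2)"
      by (simp add: Q pderiv_mult)
    ultimately have "(w k - w i)^2 * poly (pderiv Q) (w k) = 0" using q0 by simp
    then show "poly Q (w k) = 0 \<and> poly (pderiv Q) (w k) = 0" using ne q0 by simp
  qed
  then have "(\<Prod>i\<in>I. [:-w i,1:]^2) dvd Q"
    using insert.IH insert.prems(1) by (meson inj_on_insert)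
  then show ?case using insert.hyps by (simp add: Q)
qed



definition wz :: "(nat \<Rightarrow> real) \<Rightarrow> nat \<Rightarrow> complex" where "wz z i = cis (2 * pi * z i)"
definition MV :: "nat \<Rightarrow> (nat \<Rightarrow> real) \<Rightarrow> complex poly" where
  "MV N z = (\<Prod>i<N. [:- wz z i, 1:]^2)"
definition kap :: "nat \<Rightarrow> (nat \<Rightarrow> real) \<Rightarrow> complex" where
  "kap N z = (\<Prod>i<N. - 4 * wz z i)"
definition gV :: "nat \<Rightarrow> (nat \<Rightarrow> real) \<Rightarrow> nat \<Rightarrow> complex" where
  "gV N z j = coeff (MV N z) j / kap N z"
definition gfun :: "nat \<Rightarrow> (nat \<Rightarrow> real) \<Rightarrow> real \<Rightarrow> real" where
  "gfun N z x = (\<Prod>i<N. (sin (pi * (x - z i)))^2)"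

lemma degree_MV: "degree (MV N z) = 2 * N"
proof -
  have "degree (MV N z) = (\<Sum>i<N. degree ([:- wz z i, 1:]^2))"
    unfolding MV_def by (rule degree_prod_sum_eq) simp
  also have "\<dots> = (\<Sum>i<N. 2)" using degree_linear_power by (intro sum.cong) auto
  finally show ?thesis by simp
qed

lemma kap_nz: "kap N z \<noteq> 0"
  unfolding kap_def wz_def by (simp add: prod_zero_iff)

lemma poly_Pd_gV: "poly (Pd N (gV N z)) y = poly (MV N z) y / kap N z"
  unfolding poly_Pd gV_def poly_altdef[of "MV N z"] degree_MV sum_divide_distrib
  by (intro sum.cong refl) simp

lemma Pd_gV: "Pd N (gV N z) = smult (inverse (kap N z)) (MV N z)"
proof -
  have "poly (Pd N (gV N z)) = poly (smult (inverse (kap N z)) (MV N z))"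
    by (simp add: fun_eq_iff poly_Pd_gV field_simps)
  then show ?thesis by (simp only: poly_eq_poly_eq_iff)
qed

lemma cis_nz: "cis a \<noteq> 0" by simp

lemma gV_kernel: assumes "i < N"
  shows "D N (gV N z) 0 (z i) = 0 \<and> D N (gV N z) 1 (z i) = 0"
proof -
  have "[:- wz z i, 1:]^2 dvd MV N z" unfolding MV_def using assms by (intro dvd_prodI) auto
  then have "[:- wz z i, 1:]^2 dvd Pd N (gV N z)" unfolding Pd_gV by (simp add: dvd_smult)
  from dr_conv[OF this] show ?thesis
    unfolding D0_rel D1_rel wz_def by simp
qed

lemma kernel_V:
  assumes inj: "inj_on (wz z) {..<N}"
    and h: "\<forall>i<N. D N d 0 (z i) = 0 \<and> D N d 1 (z i) = 0"
  shows "\<exists>t. \<forall>j\<le>2*N. d j = t * gV N z j"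
proof -
  have r: "\<forall>i\<in>{..<N}. poly (Pd N d) (wz z i) = 0 \<and> poly (pderiv (Pd N d)) (wz z i) = 0"
  proof
    fix i assume "i \<in> {..<N}"
    then have a: "D N d 0 (z i) = 0" "D N d 1 (z i) = 0" using h by auto
    from a(1) have p0: "poly (Pd N d) (wz z i) = 0" unfolding D0_rel wz_def by simp
    from a(2) p0 have "poly (pderiv (Pd N d)) (wz z i) * wz z i = 0"
      unfolding D1_rel wz_def by simp
    then show "poly (Pd N d) (wz z i) = 0 \<and> poly (pderiv (Pd N d)) (wz z i) = 0"
      using p0 by (simp add: wz_def)
  qed
  have "MV N z dvd Pd N d" unfolding MV_def by (rule dr_multi[OF _ inj r]) simp
  then obtain Q where Q: "Pd N d = MV N z * Q" by blast
  show ?thesis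
  proof (cases "Q = 0")
    case True
    then have "\<forall>j\<le>2*N. d j = 0" using Q coeff_Pd by (metis coeff_0 mult_zero_right)
    then show ?thesis by (intro exI[of _ 0]) simp
  next
    case False
    have "MV N z \<noteq> 0" unfolding MV_def by (simp add: prod_zero_iff)
    then have "degree (Pd N d) = 2 * N + degree Q" using Q False degree_MV by (simp add: degree_mult_eq)
    then have "degree Q = 0" using degree_Pd[of N d] by simp
    then have Qc: "Q = [: coeff Q 0 :]" using degree_0_id by metis
    show ?thesis
    proof (intro exI[of _ "coeff Q 0 * kap N z"] allI impI)
      fix j assume j: "j \<le> 2*N"
      have "d j = coeff (Pd N d) j" using coeff_Pd[OF j] by simp
      also have "\<dots> = coeff Q 0 * coeff (MV N z) j" unfolding Q by (subst Qc) simp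
      also have "\<dots> = coeff Q 0 * kap N z * gV N z j" using kap_nz by (simp add: gV_def)
      finally show "d j = coeff Q 0 * kap N z * gV N z j" .
    qed
  qed
qed

lemma cis_sin: "cis u - cis (- u) = 2 * \<i> * complex_of_real (sin u)"
  by (simp add: complex_eq_iff)

lemma factor_id: "cis (- 2 * pi * x) * (cis (2 * pi * x) - cis (2 * pi * y))^2 / (- 4 * cis (2 * pi * y))
   = complex_of_real ((sin (pi * (x - y)))^2)"
proof -
  define u where "u = pi * (x - y)"
  define v where "v = pi * (x + y)"
  define U where "U = cis u"
  define V where "V = cis v"
  define s where "s = complex_of_real (sin u)"
  have U: "U \<noteq> 0" "V \<noteq> 0" by (simp_all add: U_def V_def)
  have a1: "v + u = 2 * pi * x" unfolding u_def v_def by algebra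
  have a2: "v - u = 2 * pi * y" unfolding u_def v_def by algebra
  have a3: "- (v + u) = - 2 * pi * x" unfolding u_def v_def by algebra
  have e1: "cis (2 * pi * x) = V * U" unfolding U_def V_def cis_mult a1 ..
  have e2: "cis (2 * pi * y) = V / U" unfolding U_def V_def cis_divide a2 ..
  have e3: "cis (- 2 * pi * x) = inverse (V * U)" unfolding U_def V_def cis_mult cis_inverse a3 ..
  have e4: "U - inverse U = 2 * \<i> * s"
    unfolding cis_sin[symmetric] U_def s_def cis_inverse ..
  have e5: "V * U - V / U = V * (2 * \<i> * s)" unfolding e4[symmetric] by (simp add: divide_inverse algebra_simps)
  have "cis (- 2 * pi * x) * (cis (2 * pi * x) - cis (2 * pi * y))^2 / (- 4 * cis (2 * pi * y))
      = inverse (V * U) * (V * (2 * \<i> * s))^2 / (- 4 * (V / U))"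
    unfolding e1 e2 e3 e5 ..
  also have "\<dots> = s^2" using U by (simp add: field_simps power2_eq_square)
  finally show ?thesis by (simp add: s_def u_def)
qed

lemma T_gV: "T N (gV N z) x = complex_of_real (gfun N z x)"
proof -
  have "T N (gV N z) x = cis (- 2 * pi * real N * x) * poly (MV N z) (cis (2 * pi * x)) / kap N z"
    unfolding D_T[symmetric] D0_rel poly_Pd_gV by simp
  also have "cis (- 2 * pi * real N * x) = (\<Prod>i<N. cis (- 2 * pi * x))"
  proof -
    have "- 2 * pi * real N * x = real N * (- 2 * pi * x)" by simp
    then show ?thesis by (simp only: prod_constant card_lessThan Complex.DeMoivre)
  qed
  also have "poly (MV N z) (cis (2 * pi * x)) = (\<Prod>i<N. (cis (2 * pi * x) - wz z i)^2)"
    unfolding MV_def poly_prod by simp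
  also have "(\<Prod>i<N. cis (- 2 * pi * x)) * (\<Prod>i<N. (cis (2 * pi * x) - wz z i)^2) / kap N z
     = (\<Prod>i<N. cis (- 2 * pi * x) * (cis (2 * pi * x) - cis (2 * pi * z i))^2 / (- 4 * cis (2 * pi * z i)))"
    unfolding kap_def wz_def prod.distrib[symmetric] prod_dividef[symmetric] ..
  also have "\<dots> = (\<Prod>i<N. complex_of_real ((sin (pi * (x - z i)))^2))"
    by (intro prod.cong refl factor_id)
  finally show ?thesis by (simp add: gfun_def)
qed



lemma sin_nz: assumes "-1 < y" "y < 1" "y \<noteq> 0" shows "sin (pi * y) \<noteq> 0"
proof (cases "y > 0")
  case True
  then show ?thesis using assms by (intro order.strict_implies_not_eq[symmetric] sin_gt_zero) auto
next
  case False
  then have "y < 0" using assms by simp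
  have p1: "0 < pi * (- y)" using \<open>y < 0\<close> by (intro mult_pos_pos) auto
  have p2: "pi * (- y) < pi * 1" using assms by (intro mult_strict_left_mono) auto
  have "sin (pi * (- y)) > 0" using p1 p2 by (intro sin_gt_zero) auto
  then show ?thesis by simp
qed

lemma gfun_nonneg: "gfun N z x \<ge> 0"
  unfolding gfun_def by (intro prod_nonneg) simp

lemma gfun_pos:
  assumes "\<forall>i<N. z i \<in> {0..<1}" "x \<in> {0..<1}" "x \<notin> z ` {..<N}"
  shows "gfun N z x > 0"
  unfolding gfun_def
proof (intro prod_pos)
  fix i assume i: "i \<in> {..<N}"
  then have "x \<noteq> z i" using assms(3) by auto
  moreover have "z i \<in> {0..<1}" using assms(1) i by auto
  ultimately have "sin (pi * (x - z i)) \<noteq> 0" using assms(2) by (intro sin_nz) auto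
  then show "(sin (pi * (x - z i)))^2 > 0" by simp
qed

lemma wz_inj:
  assumes "\<forall>i<N. z i \<in> {0..<1}" "inj_on z {..<N}"
  shows "inj_on (wz z) {..<N}"
proof (rule inj_onI)
  fix i k assume i: "i \<in> {..<N}" and k: "k \<in> {..<N}" and e: "wz z i = wz z k"
  have "complex_of_real ((sin (pi * (z i - z k)))^2) = 0"
    using factor_id[of "z i" "z k"] e by (simp add: wz_def)
  then have "sin (pi * (z i - z k)) = 0" by simp
  moreover have "z i \<in> {0..<1}" "z k \<in> {0..<1}" using assms(1) i k by auto
  ultimately have "z i = z k" using sin_nz[of "z i - z k"] by force
  then show "i = k" using assms(2) i k by (meson inj_onD)
qed

lemma cont_gfun: "continuous_on UNIV (gfun N z)"
  unfolding gfun_def by (intro continuous_intros)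

lemma gV_N:
  shows "gV N z N = complex_of_real (LINT x:{0..1}|lborel. gfun N z x)"
proof -
  have "gV N z N = fco N (T N (gV N z)) N" by (simp add: fco_T)
  also have "\<dots> = (LINT t:{0..1}|lborel. complex_of_real (gfun N z t))"
    unfolding fco_def T_gV by (simp add: th_def)
  also have "\<dots> = complex_of_real (LINT x:{0..1}|lborel. gfun N z x)"
    by (rule set_integral_complex_of_real)
  finally show ?thesis .
qed

lemma g0_pos:
  assumes "\<forall>i<N. z i \<in> {0..<1}"
  shows "(LINT x:{0..1}|lborel. gfun N z x) > 0"
proof -
  have si: "set_integrable lborel {0..1::real} (gfun N z)"
    unfolding set_integrable_def
    by (rule borel_integrable_compact) (auto intro: continuous_on_subset[OF cont_gfun])
  have eq: "(LINT x:{0..1}|lborel. gfun N z x) = integral {0..1} (gfun N z)"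
    using set_borel_integral_eq_integral(2)[OF si] by simp
  have int: "gfun N z integrable_on {0..1}" using set_borel_integral_eq_integral(1)[OF si] .
  have nn: "integral {0..1} (gfun N z) \<ge> 0"
    by (rule integral_nonneg[OF int]) (simp add: gfun_nonneg)
  have "infinite ({0<..<1::real} - z ` {..<N})"
    using infinite_Ioo[of "0::real" 1] by (metis Diff_infinite_finite finite_imageI finite_lessThan zero_less_one)
  then obtain x0 where "x0 \<in> {0<..<1::real} - z ` {..<N}"
    using infinite_imp_nonempty by blast
  then have x0: "x0 \<in> {0<..<1::real}" "x0 \<notin> z ` {..<N}" by auto
  have gx0: "gfun N z x0 > 0" using gfun_pos[OF assms, of x0] x0 by auto
  have "integral {0..1} (gfun N z) \<noteq> 0"
  proof
    assume "integral {0..1} (gfun N z) = 0"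
    then have hi: "(gfun N z has_integral 0) (cbox 0 1)"
      using int has_integral_integral by (metis cbox_interval)
    have "gfun N z x0 = 0"
      by (rule has_integral_0_cbox_imp_0[OF _ _ hi])
         (use x0 gfun_nonneg in \<open>auto intro: continuous_on_subset[OF cont_gfun]\<close>)
    then show False using gx0 by simp
  qed
  then show ?thesis using nn eq by simp
qed



lemma Phi_fun: "L2 q \<Longrightarrow> Phi_adj N q = D N (fco N q) 0"
  by (simp add: fun_eq_iff Phi_T D_T)

lemma hd_Phi: "L2 q \<Longrightarrow> hderiv s (Phi_adj N q) = D N (fco N q) s"
  by (simp add: Phi_fun D_T hd_T)

lemma S_pos:
  fixes N :: nat
  assumes "\<gamma> N = complex_of_real g0" "g0 > 0"
  shows "(\<Sum>j\<le>2*N. (cmod (\<gamma> j))^2) > 0"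
proof -
  have "(cmod (\<gamma> N))^2 \<le> (\<Sum>j\<le>2*N. (cmod (\<gamma> j))^2)" by (rule member_le_sum) auto
  moreover have "(cmod (\<gamma> N))^2 > 0" using assms by simp
  ultimately show ?thesis by linarith
qed

lemma coefV:
  assumes inj: "inj_on (wz z) {..<N}"
  shows "(\<forall>i<N. D N c 0 (z i) = 1 \<and> D N c 1 (z i) = 0) \<longleftrightarrow> (\<exists>t. \<forall>j\<le>2*N. c j = ee N j + t * gV N z j)"
proof
  assume h: "\<forall>i<N. D N c 0 (z i) = 1 \<and> D N c 1 (z i) = 0"
  have "\<forall>i<N. D N (\<lambda>j. c j - ee N j) 0 (z i) = 0 \<and> D N (\<lambda>j. c j - ee N j) 1 (z i) = 0"
    using h by (simp add: D_diff D_ee)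
  from kernel_V[OF inj this] obtain t where "\<forall>j\<le>2*N. c j - ee N j = t * gV N z j" by blast
  then show "\<exists>t. \<forall>j\<le>2*N. c j = ee N j + t * gV N z j" by (metis diff_add_cancel add.commute)
next
  assume "\<exists>t. \<forall>j\<le>2*N. c j = ee N j + t * gV N z j"
  then obtain t where t: "\<forall>j\<le>2*N. c j = ee N j + t * gV N z j" by blast
  have "D N c s x = D N (ee N) s x + t * D N (gV N z) s x" for s x
    using D_cong[OF t] D_lin by simp
  then show "\<forall>i<N. D N c 0 (z i) = 1 \<and> D N c 1 (z i) = 0"
    using gV_kernel by (simp add: D_ee)
qed

lemma admV:
  assumes inj: "inj_on (wz z) {..<N}"
  shows "admissible_V N N z q \<longleftrightarrow> L2 q \<and> (\<exists>t. \<forall>j\<le>2*N. fco N q j = ee N j + t * gV N z j)"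
proof (cases "L2 q")
  case True
  have e1: "Phi_adj N q = D N (fco N q) 0" using Phi_fun[OF True] .
  have e3: "hderiv 1 (D N (fco N q) 0) = D N (fco N q) 1" by (simp only: D_T hd_T)
  have "admissible_V N N z q \<longleftrightarrow> L2 q \<and> (\<forall>i<N. D N (fco N q) 0 (z i) = 1 \<and> D N (fco N q) 1 (z i) = 0)"
    unfolding admissible_V_def e1 e3 ..
  then show ?thesis using coefV[OF inj, of "fco N q"] by simp
next
  case False
  then show ?thesis by (simp add: admissible_V_def)
qed

lemma mainV:
  assumes zin: "\<forall>i<N. z i \<in> {0..<1}" and zinj: "inj_on z {..<N}"
  shows "(\<exists>p. vanishing_precert_vec N N z p) \<and>
            (\<forall>p. vanishing_precert_vec N N z p \<longrightarrow>
               (\<forall>x\<in>{0..<1}. x \<notin> z ` {..<N} \<longrightarrow>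
                  Phi_adj N p x \<in> \<real> \<and> Re (Phi_adj N p x) < 1))"
proof -
  have inj: "inj_on (wz z) {..<N}" by (rule wz_inj[OF zin zinj])
  define g0 where "g0 = (LINT x:{0..1}|lborel. gfun N z x)"
  define S where "S = (\<Sum>j\<le>2*N. (cmod (gV N z j))^2)"
  have gN: "gV N z N = complex_of_real g0" unfolding g0_def by (rule gV_N)
  have g0: "g0 > 0" unfolding g0_def by (rule g0_pos[OF zin])
  have Sp: "S > 0" unfolding S_def by (rule S_pos[of "gV N z" N g0, OF gN g0])
  note G = generic[of "admissible_V N N z" N "gV N z" g0 S, OF admV[OF inj] gN g0 S_def]
  show ?thesis
  proof (intro conjI allI impI ballI)
    show "\<exists>p. vanishing_precert_vec N N z p"
      using G(1) unfolding vanishing_precert_vec_def .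
    fix p x assume p: "vanishing_precert_vec N N z p" and x: "x \<in> {0..<1}" "x \<notin> z ` {..<N}"
    have "Phi_adj N p x = 1 - complex_of_real (g0 / S) * T N (gV N z) x"
      using G(2) p unfolding vanishing_precert_vec_def by blast
    also have "\<dots> = complex_of_real (1 - g0 / S * gfun N z x)" by (simp add: T_gV)
    finally have e: "Phi_adj N p x = complex_of_real (1 - g0 / S * gfun N z x)" .
    then show "Phi_adj N p x \<in> \<real>" by simp
    have "g0 / S * gfun N z x > 0" using g0 Sp gfun_pos[OF zin x] by simp
    then show "Re (Phi_adj N p x) < 1" using e by simp
  qed
qed



lemma alt_step:
  fixes f :: "nat \<Rightarrow> complex"
  shows "(\<Sum>j\<le>Suc n. (-1)^j * of_nat (Suc n choose j) * f j) =
         (\<Sum>j\<le>n. (-1)^j * of_nat (n choose j) * (f j - f (Suc j)))"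
proof -
  define h where "h j = (-1)^j * of_nat (n choose j) * f j" for j
  have H: "(\<Sum>i\<le>n. h (Suc i)) = (\<Sum>j\<le>n. h j) - h 0"
  proof -
    have "(\<Sum>j\<le>Suc n. h j) = h 0 + (\<Sum>i\<le>n. h (Suc i))" by (rule sum.atMost_Suc_shift)
    moreover have "(\<Sum>j\<le>Suc n. h j) = (\<Sum>j\<le>n. h j) + h (Suc n)" by simp
    moreover have "h (Suc n) = 0" by (simp add: h_def)
    ultimately show ?thesis by (simp add: algebra_simps)
  qed
  have "(\<Sum>j\<le>Suc n. (-1)^j * of_nat (Suc n choose j) * f j)
      = f 0 + (\<Sum>i\<le>n. (-1)^(Suc i) * of_nat (Suc n choose Suc i) * f (Suc i))"
    by (subst sum.atMost_Suc_shift) simp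
  also have "\<dots> = f 0 + (\<Sum>i\<le>n. h (Suc i) - (-1)^i * of_nat (n choose i) * f (Suc i))"
    by (intro arg_cong[where f="\<lambda>x. f 0 + x"] sum.cong refl) (simp add: h_def algebra_simps)
  also have "\<dots> = f 0 + (\<Sum>i\<le>n. h (Suc i)) - (\<Sum>i\<le>n. (-1)^i * of_nat (n choose i) * f (Suc i))"
    by (simp add: sum_subtractf)
  also have "\<dots> = (\<Sum>j\<le>n. h j) - (\<Sum>i\<le>n. (-1)^i * of_nat (n choose i) * f (Suc i))"
    unfolding H by (simp add: h_def)
  also have "\<dots> = (\<Sum>j\<le>n. (-1)^j * of_nat (n choose j) * (f j - f (Suc j)))"
    by (simp add: h_def sum_subtractf[symmetric] algebra_simps)
  finally show ?thesis .
qed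

lemma pow_diff: "(of_nat j :: complex)^s - (of_nat (Suc j))^s = - (\<Sum>t<s. of_nat (s choose t) * of_nat j ^ t)"
proof -
  have "(of_nat (Suc j) :: complex)^s = (of_nat j + 1)^s" by (simp add: add.commute)
  also have "\<dots> = (\<Sum>t\<le>s. of_nat (s choose t) * of_nat j ^ t * 1 ^ (s - t))" by (rule binomial_ring)
  also have "\<dots> = (\<Sum>t<s. of_nat (s choose t) * of_nat j ^ t) + of_nat j ^ s"
    by (simp add: lessThan_Suc_atMost[symmetric])
  finally show ?thesis by simp
qed

lemma fd_pow: "s < n \<Longrightarrow> (\<Sum>j\<le>n. (-1)^j * of_nat (n choose j) * (of_nat j :: complex)^s) = 0"
proof (induction n arbitrary: s)
  case 0
  then show ?case by simp
next
  case (Suc n)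
  have "(\<Sum>j\<le>Suc n. (-1)^j * of_nat (Suc n choose j) * (of_nat j :: complex)^s)
     = (\<Sum>j\<le>n. (-1)^j * of_nat (n choose j) * (- (\<Sum>t<s. of_nat (s choose t) * of_nat j ^ t)))"
    unfolding alt_step pow_diff ..
  also have "\<dots> = - (\<Sum>t<s. of_nat (s choose t) * (\<Sum>j\<le>n. (-1)^j * of_nat (n choose j) * (of_nat j :: complex)^t))"
    by (simp add: sum_distrib_left sum_negf[symmetric] algebra_simps sum.swap[of _ "{..n}"])
  also have "\<dots> = 0" using Suc.IH Suc.prems by simp
  finally show ?case .
qed

lemma poly_comb:
  fixes d x :: "nat \<Rightarrow> complex"
  assumes "\<forall>s<n. (\<Sum>j\<in>A. d j * x j ^ s) = 0" "degree Q < n"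
  shows "(\<Sum>j\<in>A. d j * poly Q (x j)) = 0"
proof -
  have "(\<Sum>j\<in>A. d j * poly Q (x j)) = (\<Sum>i\<le>degree Q. coeff Q i * (\<Sum>j\<in>A. d j * x j ^ i))"
    unfolding poly_altdef by (simp add: sum_distrib_left sum.swap[of _ A] algebra_simps)
  also have "\<dots> = 0" using assms by simp
  finally show ?thesis .
qed

definition xN :: "nat \<Rightarrow> nat \<Rightarrow> complex" where "xN N j = of_nat j - of_nat N"

definition gW :: "nat \<Rightarrow> nat \<Rightarrow> complex" where
  "gW N j = complex_of_real ((- 1 / 4)^N * (-1)^j * real (2 * N choose j))"

lemma D_at0: "D N d s 0 = (2 * of_real pi * \<i>)^s * (\<Sum>j\<le>2*N. d j * xN N j ^ s)"
proof -
  have e: "\<i> * complex_of_real (th N j) = (2 * of_real pi * \<i>) * xN N j" for j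
    by (simp add: th_def xN_def algebra_simps)
  show ?thesis
    unfolding D_def sum_distrib_left e
    by (intro sum.cong refl) (simp add: power_mult_distrib)
qed

lemma gW_kernel: assumes "s < 2*N" shows "(\<Sum>j\<le>2*N. gW N j * xN N j ^ s) = 0"
proof -
  have "(\<Sum>j\<le>2*N. gW N j * xN N j ^ s) =
     of_real ((- 1 / 4)^N) * (\<Sum>j\<le>2*N. ((-1)^j * of_nat (2*N choose j)) * poly ([:- of_nat N, 1:]^s) (of_nat j))"
    unfolding sum_distrib_left by (intro sum.cong refl) (simp add: gW_def xN_def poly_power algebra_simps)
  also have "(\<Sum>j\<le>2*N. ((-1)^j * of_nat (2*N choose j)) * poly ([:- of_nat N, 1:]^s) (of_nat j :: complex)) = 0"
  proof -
    have "\<forall>s'<2*N. (\<Sum>j\<le>2*N. ((-1)^j * of_nat (2*N choose j)) * (of_nat j :: complex)^s') = 0"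
      using fd_pow by simp
    from poly_comb[OF this, of "[:- of_nat N, 1:]^s"] assms show ?thesis
      by (simp add: degree_linear_power)
  qed
  finally show ?thesis by simp
qed



lemma kernel_W:
  assumes h: "\<forall>s<2*N. (\<Sum>j\<le>2*N. d j * xN N j ^ s) = 0"
  shows "\<exists>t. \<forall>j\<le>2*N. d j = t * gW N j"
proof -
  define Q where "Q m = (\<Prod>i\<in>{1..2*N}-{m}. [:- xN N i, 1:])" for m
  have degQ: "degree (Q m) < 2*N" if "m \<in> {1..2*N}" for m
  proof -
    have "degree (Q m) = (\<Sum>i\<in>{1..2*N}-{m}. degree [:- xN N i, 1:])"
      unfolding Q_def by (rule degree_prod_sum_eq) simp
    also have "\<dots> = card ({1..2*N}-{m})" by simp
    also have "\<dots> = 2*N - 1" using that by (simp add: card_Diff_singleton)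
    finally show ?thesis using that by simp
  qed
  have polyQ: "poly (Q m) (xN N j) = (\<Prod>i\<in>{1..2*N}-{m}. xN N j - xN N i)" for m j
    by (simp add: Q_def poly_prod)
  have zero: "poly (Q m) (xN N j) = 0" if "j \<in> {1..2*N}-{m}" for m j
    unfolding polyQ using that by (intro prod_zero) auto
  have nz: "poly (Q m) (xN N m) \<noteq> 0" for m
    unfolding polyQ by (simp add: prod_zero_iff xN_def)
  have rel: "e 0 * poly (Q m) (xN N 0) + e m * poly (Q m) (xN N m) = 0"
    if he: "\<forall>s<2*N. (\<Sum>j\<le>2*N. e j * xN N j ^ s) = 0" and m: "m \<in> {1..2*N}" for e m
  proof -
    have "(\<Sum>j\<le>2*N. e j * poly (Q m) (xN N j)) = 0" by (rule poly_comb[OF he degQ[OF m]])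
    moreover have "(\<Sum>j\<le>2*N. e j * poly (Q m) (xN N j)) = (\<Sum>j\<in>{0,m}. e j * poly (Q m) (xN N j))"
      by (rule sum.mono_neutral_right) (use m zero in auto)
    moreover have "(\<Sum>j\<in>{0,m}. e j * poly (Q m) (xN N j)) = e 0 * poly (Q m) (xN N 0) + e m * poly (Q m) (xN N m)"
      using m by simp
    ultimately show ?thesis by simp
  qed
  have g0: "gW N 0 \<noteq> 0" by (simp add: gW_def)
  show ?thesis
  proof (intro exI[of _ "d 0 / gW N 0"] allI impI)
    fix j assume j: "j \<le> 2*N"
    show "d j = d 0 / gW N 0 * gW N j"
    proof (cases "j = 0")
      case True then show ?thesis using g0 by simp
    next
      case False
      then have m: "j \<in> {1..2*N}" using j by auto
      have r1: "d 0 * poly (Q j) (xN N 0) + d j * poly (Q j) (xN N j) = 0" by (rule rel[OF h m])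
      have r2: "gW N 0 * poly (Q j) (xN N 0) + gW N j * poly (Q j) (xN N j) = 0"
        by (rule rel[OF _ m]) (use gW_kernel in auto)
      have "d j * gW N 0 * poly (Q j) (xN N j) = d 0 * gW N j * poly (Q j) (xN N j)"
      proof -
        have "d j * poly (Q j) (xN N j) = - (d 0 * poly (Q j) (xN N 0))" using r1 by (simp only: add_eq_0_iff)
        moreover have "gW N j * poly (Q j) (xN N j) = - (gW N 0 * poly (Q j) (xN N 0))" using r2 by (simp only: add_eq_0_iff)
        ultimately have "d j * poly (Q j) (xN N j) * gW N 0 = d 0 * (gW N j * poly (Q j) (xN N j))" by simp
        then show ?thesis by (simp add: ac_simps)
      qed
      then have "d j * gW N 0 = d 0 * gW N j" using nz[of j] by simp
      then show ?thesis using g0 by (simp add: field_simps)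
    qed
  qed
qed

lemma neg1_pow_diff: "k \<le> 2*n \<Longrightarrow> (-1::complex)^(2*n - k) = (-1)^k"
proof -
  assume a: "k \<le> 2*n"
  define A where "A = (-1::complex)^(2*n - k)"
  define B where "B = (-1::complex)^k"
  have h1: "A * B = 1" unfolding A_def B_def using a by (simp add: power_add[symmetric])
  have h2: "B * B = 1" unfolding B_def by (simp add: power_add[symmetric] flip: mult_2)
  have "A = A * (B * B)" using h2 by simp
  also have "\<dots> = (A * B) * B" by (simp add: mult.assoc)
  also have "\<dots> = B" using h1 by simp
  finally show ?thesis unfolding A_def B_def .
qed



lemma T_gW: "T N (gW N) x = complex_of_real ((sin (pi * x))^(2*N))"
proof -
  define U where "U = cis (pi * x)"
  have U0: "U \<noteq> 0" by (simp add: U_def)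
  have iU: "inverse U = cis (- (pi * x))" by (simp add: U_def cis_inverse)
  have s: "complex_of_real (sin (pi*x)) = (U - inverse U) / (2*\<i>)"
  proof -
    have s0: "U - inverse U = 2 * \<i> * complex_of_real (sin (pi*x))" by (simp only: iU) (simp only: U_def cis_sin)
    show ?thesis unfolding s0 by simp
  qed
  have i4: "(2*\<i>)^(2*N) = (-4::complex)^N" by (simp add: power_mult)
  have "complex_of_real ((sin (pi * x))^(2*N)) = (U + - inverse U)^(2*N) / (-4)^N"
    by (simp only: of_real_power s power_divide i4 diff_conv_add_uminus)
  also have "(U + - inverse U)^(2*N) = (\<Sum>k\<le>2*N. of_nat (2*N choose k) * U^k * (- inverse U)^(2*N-k))"
    by (rule binomial_ring)
  also have "\<dots> = (\<Sum>k\<le>2*N. of_nat (2*N choose k) * (-1)^k * cis (th N k * x))"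
  proof (rule sum.cong[OF refl])
    fix k assume k: "k \<in> {..2*N}"
    have "U^k * (- inverse U)^(2*N-k) = (-1)^(2*N-k) * (U^k * (inverse U)^(2*N-k))"
      unfolding power_minus[of "inverse U"] by (rule mult.left_commute)
    also have "(-1::complex)^(2*N-k) = (-1)^k" using k by (simp add: neg1_pow_diff)
    also have "U^k * (inverse U)^(2*N-k) = cis (real k * (pi * x) + real (2*N-k) * (- (pi * x)))"
      unfolding iU unfolding U_def Complex.DeMoivre cis_mult ..
    also have "real k * (pi * x) + real (2*N-k) * (- (pi * x)) = th N k * x"
      using k by (simp add: of_nat_diff th_def algebra_simps)
    finally show "of_nat (2*N choose k) * U^k * (- inverse U)^(2*N-k) = of_nat (2*N choose k) * (-1)^k * cis (th N k * x)"
      by (simp add: mult.assoc)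
  qed
  finally have e: "complex_of_real ((sin (pi * x))^(2*N)) = (\<Sum>k\<le>2*N. of_nat (2*N choose k) * (-1)^k * cis (th N k * x)) / (-4)^N" .
  have q: "complex_of_real ((- 1 / 4)^N) = 1 / (-4)^N"
  proof -
    have "complex_of_real ((- 1 / 4)^N) = (1 / (-4))^N" by simp
    also have "\<dots> = 1 / (-4)^N" by (rule power_one_over)
    finally show ?thesis .
  qed
  have t: "gW N k = of_nat (2*N choose k) * (-1)^k / (-4)^N" for k
    unfolding gW_def of_real_mult q by simp
  show ?thesis
    unfolding e T_def sum_divide_distrib t
    by (intro sum.cong refl) simp
qed



lemma gW_D0: "s < 2*N \<Longrightarrow> D N (gW N) s 0 = 0"
  by (simp add: D_at0 gW_kernel)

lemma coefW:
  assumes N1: "N \<ge> 1"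
  shows "(D N c 0 0 = 1 \<and> (\<forall>s\<in>{1..2*N-1}. D N c s 0 = 0)) \<longleftrightarrow> (\<exists>t. \<forall>j\<le>2*N. c j = ee N j + t * gW N j)"
proof
  assume h: "D N c 0 0 = 1 \<and> (\<forall>s\<in>{1..2*N-1}. D N c s 0 = 0)"
  have "\<forall>s<2*N. (\<Sum>j\<le>2*N. (c j - ee N j) * xN N j ^ s) = 0"
  proof (intro allI impI)
    fix s assume s: "s < 2*N"
    have "D N (\<lambda>j. c j - ee N j) s 0 = 0"
    proof (cases "s = 0")
      case True then show ?thesis using h by (simp add: D_diff D_ee)
    next
      case False
      then have "s \<in> {1..2*N-1}" using s by auto
      then show ?thesis using h False by (simp add: D_diff D_ee)
    qed
    moreover have "(2 * complex_of_real pi * \<i>)^s \<noteq> 0" by simp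
    ultimately show "(\<Sum>j\<le>2*N. (c j - ee N j) * xN N j ^ s) = 0"
      unfolding D_at0 by simp
  qed
  from kernel_W[OF this] obtain t where "\<forall>j\<le>2*N. c j - ee N j = t * gW N j" by blast
  then show "\<exists>t. \<forall>j\<le>2*N. c j = ee N j + t * gW N j" by (metis diff_add_cancel add.commute)
next
  assume "\<exists>t. \<forall>j\<le>2*N. c j = ee N j + t * gW N j"
  then obtain t where t: "\<forall>j\<le>2*N. c j = ee N j + t * gW N j" by blast
  have e: "D N c s x = D N (ee N) s x + t * D N (gW N) s x" for s x
    using D_cong[OF t] D_lin by simp
  show "D N c 0 0 = 1 \<and> (\<forall>s\<in>{1..2*N-1}. D N c s 0 = 0)"
  proof (intro conjI ballI)
    show "D N c 0 0 = 1" unfolding e using N1 by (simp add: D_ee gW_D0)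
    fix s assume "s \<in> {1..2*N-1}"
    then have "s < 2*N" "s \<noteq> 0" by auto
    then show "D N c s 0 = 0" unfolding e by (simp add: D_ee gW_D0)
  qed
qed

lemma admW: assumes N1: "N \<ge> 1" shows "admissible_W N N q \<longleftrightarrow> L2 q \<and> (\<exists>t. \<forall>j\<le>2*N. fco N q j = ee N j + t * gW N j)"
proof (cases "L2 q")
  case True
  have e1: "Phi_adj N q = D N (fco N q) 0" using Phi_fun[OF True] .
  have e3: "hderiv s (D N (fco N q) 0) = D N (fco N q) s" for s by (simp only: D_T hd_T)
  have "admissible_W N N q \<longleftrightarrow> L2 q \<and> (D N (fco N q) 0 0 = 1 \<and> (\<forall>s\<in>{1..2*N-1}. D N (fco N q) s 0 = 0))"
    unfolding admissible_W_def e1 e3 by simp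
  then show ?thesis using coefW[OF N1, of "fco N q"] by simp
next
  case False
  then show ?thesis by (simp add: admissible_W_def)
qed

lemma mainW:
  assumes N1: "N \<ge> 1"
  shows "(\<exists>p. limiting_precert_vec N N p)
       \<and> (\<exists>C>0. \<forall>p. limiting_precert_vec N N p \<longrightarrow>
            (\<forall>x. Phi_adj N p x = complex_of_real (1 - C * (sin (pi * x)) ^ (2 * N))))
       \<and> (\<forall>p. limiting_precert_vec N N p \<longrightarrow>
            (\<forall>x\<in>{0<..<1}. Phi_adj N p x \<in> \<real> \<and> Re (Phi_adj N p x) < 1))"
proof -
  define g0 where "g0 = (1/4)^N * real (2 * N choose N)"
  define S where "S = (\<Sum>j\<le>2*N. (cmod (gW N j))^2)"
  have gN: "gW N N = complex_of_real g0"
  proof -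
    have "(- 1 / 4::real)^N * (-1)^N = (1/4)^N" by (simp add: power_mult_distrib[symmetric])
    then show ?thesis unfolding gW_def g0_def by (metis mult.commute mult.left_commute)
  qed
  have g0: "g0 > 0" unfolding g0_def by simp
  have Sp: "S > 0" unfolding S_def by (rule S_pos[of "gW N" N g0, OF gN g0])
  note G = generic[of "admissible_W N N" N "gW N" g0 S, OF admW[OF N1] gN g0 S_def]
  have F: "Phi_adj N p x = complex_of_real (1 - g0 / S * (sin (pi * x)) ^ (2 * N))"
    if "limiting_precert_vec N N p" for p x
  proof -
    have "Phi_adj N p x = 1 - complex_of_real (g0 / S) * T N (gW N) x"
      using G(2) that unfolding limiting_precert_vec_def by blast
    also have "\<dots> = complex_of_real (1 - g0 / S * (sin (pi * x)) ^ (2 * N))" by (simp add: T_gW)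
    finally show ?thesis .
  qed
  show ?thesis
  proof (intro conjI)
    show "\<exists>p. limiting_precert_vec N N p" using G(1) unfolding limiting_precert_vec_def .
    show "\<exists>C>0. \<forall>p. limiting_precert_vec N N p \<longrightarrow>
            (\<forall>x. Phi_adj N p x = complex_of_real (1 - C * (sin (pi * x)) ^ (2 * N)))"
      using F g0 Sp by (intro exI[of _ "g0 / S"]) auto
    show "\<forall>p. limiting_precert_vec N N p \<longrightarrow>
            (\<forall>x\<in>{0<..<1}. Phi_adj N p x \<in> \<real> \<and> Re (Phi_adj N p x) < 1)"
    proof (intro allI impI ballI conjI)
      fix p x assume p: "limiting_precert_vec N N p" and x: "x \<in> {0<..<1::real}"
      show "Phi_adj N p x \<in> \<real>" using F[OF p] by simp
      have "sin (pi * x) > 0" using x by (intro sin_gt_zero) auto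
      then have "g0 / S * (sin (pi * x)) ^ (2 * N) > 0" using g0 Sp by simp
      then show "Re (Phi_adj N p x) < 1" using F[OF p] by simp
    qed
  qed
qed

theorem mainTheorem1:
  fixes N fc :: nat
  assumes "N \<ge> 1" and "fc = N"
  shows "(\<forall>z. (\<forall>i<N. z i \<in> {0..<1}) \<and> inj_on z {..<N} \<longrightarrow>
            (\<exists>p. vanishing_precert_vec fc N z p) \<and>
            (\<forall>p. vanishing_precert_vec fc N z p \<longrightarrow>
               (\<forall>x\<in>{0..<1}. x \<notin> z ` {..<N} \<longrightarrow>
                  Phi_adj fc p x \<in> \<real> \<and> Re (Phi_adj fc p x) < 1)))
       \<and> (\<exists>p. limiting_precert_vec fc N p)
       \<and> (\<exists>C>0. \<forall>p. limiting_precert_vec fc N p \<longrightarrow>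
            (\<forall>x. Phi_adj fc p x = complex_of_real (1 - C * (sin (pi * x)) ^ (2 * N))))
       \<and> (\<forall>p. limiting_precert_vec fc N p \<longrightarrow>
            (\<forall>x\<in>{0<..<1}. Phi_adj fc p x \<in> \<real> \<and> Re (Phi_adj fc p x) < 1))"
  unfolding assms(2)
proof (rule conjI)
  show "\<forall>z. (\<forall>i<N. z i \<in> {0..<1}) \<and> inj_on z {..<N} \<longrightarrow>
            (\<exists>p. vanishing_precert_vec N N z p) \<and>
            (\<forall>p. vanishing_precert_vec N N z p \<longrightarrow>
               (\<forall>x\<in>{0..<1}. x \<notin> z ` {..<N} \<longrightarrow>
                  Phi_adj N p x \<in> \<real> \<and> Re (Phi_adj N p x) < 1))"
  proof (intro allI impI)
    fix z :: "nat \<Rightarrow> real" assume h: "(\<forall>i<N. z i \<in> {0..<1}) \<and> inj_on z {..<N}"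
    show "(\<exists>p. vanishing_precert_vec N N z p) \<and>
            (\<forall>p. vanishing_precert_vec N N z p \<longrightarrow>
               (\<forall>x\<in>{0..<1}. x \<notin> z ` {..<N} \<longrightarrow>
                  Phi_adj N p x \<in> \<real> \<and> Re (Phi_adj N p x) < 1))"
      using h by (intro mainV) auto
  qed
  show "(\<exists>p. limiting_precert_vec N N p)
       \<and> (\<exists>C>0. \<forall>p. limiting_precert_vec N N p \<longrightarrow>
            (\<forall>x. Phi_adj N p x = complex_of_real (1 - C * (sin (pi * x)) ^ (2 * N))))
       \<and> (\<forall>p. limiting_precert_vec N N p \<longrightarrow>
            (\<forall>x\<in>{0<..<1}. Phi_adj N p x \<in> \<real> \<and> Re (Phi_adj N p x) < 1))"
    by (rule mainW[OF assms(1)])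
qed

end
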